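(* Let $p$ be a prime, $C\subseteq\mathbb{F}_p^{2n}$ a symplectic self-orthogonal code with stabilizer code $Q(C)\subseteq\mathbb{C}^{p^n}$, and $J\subsetneq\{1,\dots,n\}$. Let $\overline J=\{1,\dots,n\}\setminus J$, let $|\varphi\rangle\in Q(C)$ and $\sigma=\mathrm{tr}_{\overline J}[|\varphi\rangle\langle\varphi|]$. Let $Q(\sigma_J(C))\subseteq\mathbb{C}^{p^{|J|}}$ be the stabilizer code defined by the shortened code $\sigma_J(C)$, with the character chosen so that for every $\mathbf z\in\sigma_J(C)$ and the vector $\mathbf y\in C$ with $\pi_J(\mathbf y)=\mathbf z$ and zero coordinates outside $J$, $\lambda(E_{\mathbf z})=\lambda(E_{\mathbf y})$. Then the column space of $\sigma$ satisfies $\mathrm{col}(\sigma)\subseteq Q(\sigma_J(C))$.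
   Context: Vectors of $\mathbb{F}_p^{2m}$ are written $(\mathbf a|\mathbf b)$, $\mathbf a,\mathbf b\in\mathbb F_p^m$, with coordinate pairs $(a_j,b_j)$ indexed by a set of size $m$. The symplectic form is $(\mathbf a|\mathbf b)\cdot_s(\mathbf c|\mathbf d)=\mathbf a\cdot\mathbf d-\mathbf b\cdot\mathbf c$; $C^{\perp_s}$ is the dual, and $C$ is symplectic self-orthogonal if $C\subseteq C^{\perp_s}$. For $R\subseteq\{1,\dots,n\}$, $\pi_R(\mathbf a|\mathbf b)=(a_j|b_j)_{j\in R}$ and $\sigma_R(D)=\{\pi_R(\mathbf y):\mathbf y=(\mathbf a|\mathbf b)\in D,\ \mathrm{supp}(\mathbf a)\cup\mathrm{supp}(\mathbf b)\subseteq R\}$. Let $\xi=e^{2\pi\iota/p}$, $X(a)|x\rangle=|x+a\rangle$, $Z(b)|x\rangle=\xi^{bx}|x\rangle$ on $\mathbb C^p$, and $E_{(\mathbf a,\mathbf b)}=\bigotimes_j X(a_j)Z(b_j)$. For a symplectic self-orthogonal code $D\subseteq\mathbb F_p^{2m}$, the stabilizer code $Q(D)\subseteq\mathbb C^{p^m}$ is the common eigenspace $\{v:Ev=\lambda(E)v\ \forall E\in S\}$, where $S$ is the commutative group generated by scalars $\xi^\ell\mathcal I$ and the $E_{\mathbf y}$, $\mathbf y\in D$, and $\lambda$ is a character of $S$ with $\lambda(\xi\mathcal I)=\xi$. $\mathrm{tr}_{\overline J}$ is the partial trace over the qudits indexed by $\overline J$. *)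

theory Defs
  imports Complex_Main "HOL-Computational_Algebra.Primes"
begin

text \<open>Qudit basis states over an index set I: functions x with x i < p for i in I and x i = 0
  outside I (so the space C^(p^|I|) is the space of complex functions on these states).
  Vectors (a|b) of F_p^(2|I|) are pairs of functions with values in {0..<p} on I, zero outside I.\<close>

type_synonym st = "nat \<Rightarrow> nat"
type_synonym fv = "(nat \<Rightarrow> nat) \<times> (nat \<Rightarrow> nat)"
type_synonym op = "st \<Rightarrow> st \<Rightarrow> complex"

definition xi :: "nat \<Rightarrow> complex" where
  "xi p = cis (2 * pi / real p)"

definition basis :: "nat set \<Rightarrow> nat \<Rightarrow> st set" where
  "basis I p = {x. (\<forall>i\<in>I. x i < p) \<and> (\<forall>i. i \<notin> I \<longrightarrow> x i = 0)}"

definition fvecs :: "nat set \<Rightarrow> nat \<Rightarrow> fv set" where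
  "fvecs I p = {(a, b). (\<forall>i\<in>I. a i < p \<and> b i < p) \<and> (\<forall>i. i \<notin> I \<longrightarrow> a i = 0 \<and> b i = 0)}"

fun vadd :: "nat \<Rightarrow> fv \<Rightarrow> fv \<Rightarrow> fv" where
  "vadd p (a, b) (c, d) = (\<lambda>i. (a i + c i) mod p, \<lambda>i. (b i + d i) mod p)"

fun smul :: "nat \<Rightarrow> nat \<Rightarrow> fv \<Rightarrow> fv" where
  "smul p k (a, b) = (\<lambda>i. (k * a i) mod p, \<lambda>i. (k * b i) mod p)"

definition is_code :: "nat set \<Rightarrow> nat \<Rightarrow> fv set \<Rightarrow> bool" where
  "is_code I p C \<longleftrightarrow> C \<subseteq> fvecs I p \<and> (\<lambda>i. 0, \<lambda>i. 0) \<in> C \<and>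
     (\<forall>y\<in>C. \<forall>z\<in>C. vadd p y z \<in> C) \<and> (\<forall>k. \<forall>y\<in>C. smul p k y \<in> C)"

fun symp :: "nat set \<Rightarrow> nat \<Rightarrow> fv \<Rightarrow> fv \<Rightarrow> int" where
  "symp I p (a, b) (c, d) = (\<Sum>i\<in>I. int (a i * d i) - int (b i * c i)) mod int p"

definition symp_self_orth :: "nat set \<Rightarrow> nat \<Rightarrow> fv set \<Rightarrow> bool" where
  "symp_self_orth I p C \<longleftrightarrow> is_code I p C \<and> (\<forall>y\<in>C. \<forall>z\<in>C. symp I p y z = 0)"

fun proj :: "nat set \<Rightarrow> fv \<Rightarrow> fv" where
  "proj R (a, b) = (\<lambda>i. if i \<in> R then a i else 0, \<lambda>i. if i \<in> R then b i else 0)"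

fun supp_in :: "nat set \<Rightarrow> fv \<Rightarrow> bool" where
  "supp_in R (a, b) \<longleftrightarrow> (\<forall>i. i \<notin> R \<longrightarrow> a i = 0 \<and> b i = 0)"

definition shorten :: "nat set \<Rightarrow> fv set \<Rightarrow> fv set" where
  "shorten R D = {proj R y | y. y \<in> D \<and> supp_in R y}"

text \<open>Operators are matrices indexed by basis states (entry K y x = <y|K|x>), zero outside.
  E_(a,b) = tensor of X(a_j) Z(b_j), with X(a)Z(b)|x> = xi^(b x) |x + a>.\<close>
fun Eop :: "nat set \<Rightarrow> nat \<Rightarrow> fv \<Rightarrow> op" where
  "Eop I p (a, b) = (\<lambda>y x. if y \<in> basis I p \<and> x \<in> basis I p \<and> (\<forall>i\<in>I. y i = (x i + a i) mod p)
        then xi p ^ (\<Sum>i\<in>I. b i * x i) else 0)"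

definition idop :: "nat set \<Rightarrow> nat \<Rightarrow> op" where
  "idop I p = (\<lambda>y x. if y \<in> basis I p \<and> y = x then 1 else 0)"

definition opmul :: "nat set \<Rightarrow> nat \<Rightarrow> op \<Rightarrow> op \<Rightarrow> op" where
  "opmul I p K L = (\<lambda>y x. \<Sum>z\<in>basis I p. K y z * L z x)"

definition scal :: "complex \<Rightarrow> op \<Rightarrow> op" where
  "scal c K = (\<lambda>y x. c * K y x)"

text \<open>The group S generated by the scalars xi^l I and the E_y, y in D
  (a finite set of operators of finite order, so closure under products suffices).\<close>
inductive_set stab_group :: "nat set \<Rightarrow> nat \<Rightarrow> fv set \<Rightarrow> op set" for I p D where
  scalar: "scal (xi p ^ l) (idop I p) \<in> stab_group I p D"
| gen: "y \<in> D \<Longrightarrow> Eop I p y \<in> stab_group I p D"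
| mult: "A \<in> stab_group I p D \<Longrightarrow> B \<in> stab_group I p D \<Longrightarrow> opmul I p A B \<in> stab_group I p D"

definition is_character :: "nat set \<Rightarrow> nat \<Rightarrow> fv set \<Rightarrow> (op \<Rightarrow> complex) \<Rightarrow> bool" where
  "is_character I p D lam \<longleftrightarrow>
     (\<forall>A\<in>stab_group I p D. \<forall>B\<in>stab_group I p D. lam (opmul I p A B) = lam A * lam B) \<and>
     (\<forall>A\<in>stab_group I p D. lam A \<noteq> 0) \<and>
     lam (scal (xi p) (idop I p)) = xi p"

definition is_vec :: "nat set \<Rightarrow> nat \<Rightarrow> (st \<Rightarrow> complex) \<Rightarrow> bool" where
  "is_vec I p v \<longleftrightarrow> (\<forall>x. x \<notin> basis I p \<longrightarrow> v x = 0)"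

definition opapp :: "nat set \<Rightarrow> nat \<Rightarrow> op \<Rightarrow> (st \<Rightarrow> complex) \<Rightarrow> (st \<Rightarrow> complex)" where
  "opapp I p K v = (\<lambda>y. \<Sum>x\<in>basis I p. K y x * v x)"

definition stab_code :: "nat set \<Rightarrow> nat \<Rightarrow> fv set \<Rightarrow> (op \<Rightarrow> complex) \<Rightarrow> (st \<Rightarrow> complex) set" where
  "stab_code I p D lam = {v. is_vec I p v \<and>
      (\<forall>E\<in>stab_group I p D. opapp I p E v = (\<lambda>x. lam E * v x))}"

definition outer :: "(st \<Rightarrow> complex) \<Rightarrow> op" where
  "outer phi = (\<lambda>y x. phi y * cnj (phi x))"

definition merge :: "nat set \<Rightarrow> st \<Rightarrow> st \<Rightarrow> st" where
  "merge K u w = (\<lambda>i. if i \<in> K then u i else w i)"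

definition ptrace :: "nat set \<Rightarrow> nat \<Rightarrow> nat set \<Rightarrow> op \<Rightarrow> op" where
  "ptrace I p T rho = (\<lambda>y x. if y \<in> basis (I - T) p \<and> x \<in> basis (I - T) p
      then (\<Sum>w\<in>basis T p. rho (merge (I - T) y w) (merge (I - T) x w)) else 0)"

definition colspace :: "nat set \<Rightarrow> nat \<Rightarrow> op \<Rightarrow> (st \<Rightarrow> complex) set" where
  "colspace I p K = {opapp I p K v | v. is_vec I p v}"

end

theory Submission
  imports Defs "HOL-Library.FuncSet"
begin

lemma finite_basis:
  assumes "finite I" shows "finite (basis I p)"
proof -
  have "basis I p \<subseteq> (\<lambda>f i. if i \<in> I then f i else 0) ` PiE I (\<lambda>_. {..<p})"
  proof
    fix x assume x: "x \<in> basis I p"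
    have "x = (\<lambda>i. if i \<in> I then restrict x I i else 0)"
      using x unfolding basis_def by (auto intro!: ext )
    moreover have "restrict x I \<in> PiE I (\<lambda>_. {..<p})" using x unfolding basis_def by auto
    ultimately show "x \<in> (\<lambda>f i. if i \<in> I then f i else 0) ` PiE I (\<lambda>_. {..<p})" by blast
  qed
  moreover have "finite ((\<lambda>f i. if i \<in> I then f i else 0) ` PiE I (\<lambda>_. {..<p}))"
    using assms by (intro finite_imageI finite_PiE) auto
  ultimately show ?thesis using finite_subset by blast
qed

lemma merge_basis:
  assumes "J \<subseteq> I" "z \<in> basis J p" "w \<in> basis (I - J) p"
  shows "merge J z w \<in> basis I p"
  using assms unfolding basis_def merge_def by auto

lemma E_merge:
  assumes "J \<subseteq> I" "finite I" "supp_in J (a, b)" "z \<in> basis J p" "x \<in> basis J p"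
    "w \<in> basis (I - J) p"
  shows "Eop I p (a, b) (merge J z w) (merge J x w) = Eop J p (proj J (a, b)) z x"
proof -
  have c: "(\<forall>i\<in>I. merge J z w i = (merge J x w i + a i) mod p)
        \<longleftrightarrow> (\<forall>i\<in>J. z i = (x i + (if i \<in> J then a i else 0)) mod p)"
    using assms unfolding merge_def basis_def by auto
  have "(\<Sum>i\<in>I. b i * merge J x w i) = (\<Sum>i\<in>J. b i * merge J x w i)"
    using assms by (intro sum.mono_neutral_right) auto
  also have "\<dots> = (\<Sum>i\<in>J. (if i \<in> J then b i else 0) * x i)"
    unfolding merge_def by simp
  finally have ph: "(\<Sum>i\<in>I. b i * merge J x w i) = (\<Sum>i\<in>J. (if i \<in> J then b i else 0) * x i)" .
  show ?thesis using c ph merge_basis[OF assms(1,4,6)] merge_basis[OF assms(1,5,6)] assms(4,5)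
    by simp
qed

lemma opapp_opmul:
  "opapp I p (opmul I p A B) u = opapp I p A (opapp I p B u)"
  unfolding opapp_def opmul_def
  by (auto simp: sum_distrib_left sum_distrib_right mult.assoc intro!: ext sum.swap)

lemma opmul_scal:
  assumes "finite (basis I p)"
  shows "opmul I p (scal c (idop I p)) (scal d (idop I p)) = scal (c * d) (idop I p)"
proof (intro ext)
  fix y x
  have "(\<Sum>z\<in>basis I p. scal c (idop I p) y z * scal d (idop I p) z x)
      = (\<Sum>z\<in>basis I p. if z = y then (if y \<in> basis I p \<and> y = x then c * d else 0) else 0)"
    by (intro sum.cong) (auto simp: scal_def idop_def)
  also have "\<dots> = scal (c * d) (idop I p) y x"
    using assms by (simp add: scal_def idop_def)
  finally show "opmul I p (scal c (idop I p)) (scal d (idop I p)) y x = scal (c * d) (idop I p) y x"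
    unfolding opmul_def .
qed

lemma char_scalar:
  assumes "is_character I p D lam" "finite (basis I p)"
  shows "lam (scal (xi p ^ l) (idop I p)) = xi p ^ l"
proof (induction l)
  case 0
  let ?e = "scal (xi p ^ 0) (idop I p)"
  have m: "?e \<in> stab_group I p D" by (rule stab_group.scalar)
  have "opmul I p ?e ?e = ?e" using opmul_scal[OF assms(2)] by simp
  then have "lam ?e = lam ?e * lam ?e" using assms(1) m unfolding is_character_def by metis
  moreover have "lam ?e \<noteq> 0" using assms(1) m unfolding is_character_def by blast
  ultimately show ?case by simp
next
  case (Suc l)
  have m1: "scal (xi p ^ 1) (idop I p) \<in> stab_group I p D" by (rule stab_group.scalar)
  have m2: "scal (xi p ^ l) (idop I p) \<in> stab_group I p D" by (rule stab_group.scalar)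
  have "scal (xi p ^ Suc l) (idop I p) = opmul I p (scal (xi p ^ 1) (idop I p)) (scal (xi p ^ l) (idop I p))"
    using opmul_scal[OF assms(2)] by simp
  then have "lam (scal (xi p ^ Suc l) (idop I p)) = lam (scal (xi p ^ 1) (idop I p)) * lam (scal (xi p ^ l) (idop I p))"
    using assms(1) m1 m2 unfolding is_character_def by metis
  then show ?case using Suc assms(1) unfolding is_character_def by simp
qed

lemma eig_merge:
  assumes JI: "J \<subseteq> I" and fI: "finite I" and sp: "supp_in J y0"
    and eig: "opapp I p (Eop I p y0) phi = (\<lambda>x. L * phi x)"
    and z: "z \<in> basis J p" and w: "w \<in> basis (I - J) p"
  shows "(\<Sum>x\<in>basis J p. Eop J p (proj J y0) z x * phi (merge J x w)) = L * phi (merge J z w)"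
proof -
  obtain a b where y0: "y0 = (a, b)" by (cases y0)
  have sp': "supp_in J (a, b)" using sp y0 by simp
  have fb: "finite (basis I p)" using fI by (rule finite_basis)
  have inj: "inj_on (\<lambda>x. merge J x w) (basis J p)"
  proof (rule inj_onI)
    fix x x' assume "x \<in> basis J p" "x' \<in> basis J p" "merge J x w = merge J x' w"
    note h = this
    show "x = x'"
    proof
      fix i
      show "x i = x' i"
      proof (cases "i \<in> J")
        case True then show ?thesis using fun_cong[OF h(3), of i] unfolding merge_def by simp
      next
        case False then show ?thesis using h(1,2) unfolding basis_def by auto
      qed
    qed
  qed
  have sub: "(\<lambda>x. merge J x w) ` basis J p \<subseteq> basis I p"
    using merge_basis[OF JI _ w] z by blast
  have zero: "Eop I p (a, b) (merge J z w) x'' * phi x'' = 0"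
    if "x'' \<in> basis I p - (\<lambda>x. merge J x w) ` basis J p" for x''
  proof (rule ccontr)
    assume ne: "Eop I p (a, b) (merge J z w) x'' * phi x'' \<noteq> 0"
    then have cond: "\<forall>i\<in>I. merge J z w i = (x'' i + a i) mod p" and xb: "x'' \<in> basis I p"
      by (metis Eop.simps mult_eq_0_iff)+
    define x where "x = (\<lambda>i. if i \<in> J then x'' i else 0)"
    have xJ: "x \<in> basis J p" using xb JI unfolding x_def basis_def by auto
    have "merge J x w = x''"
    proof
      fix i
      show "merge J x w i = x'' i"
      proof (cases "i \<in> J")
        case True then show ?thesis unfolding merge_def x_def by simp
      next
        case False
        show ?thesis
        proof (cases "i \<in> I")
          case True
          then have "w i = (x'' i + a i) mod p" using cond False unfolding merge_def by auto
          moreover have "a i = 0" using sp' False by auto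
          moreover have "x'' i < p" using xb True unfolding basis_def by auto
          ultimately show ?thesis using False unfolding merge_def by simp
        next
          case F2: False
          then show ?thesis using xb w False unfolding basis_def merge_def by auto
        qed
      qed
    qed
    then show False using that xJ by blast
  qed
  have "L * phi (merge J z w) = opapp I p (Eop I p y0) phi (merge J z w)"
    using eig by simp
  also have "\<dots> = (\<Sum>x''\<in>basis I p. Eop I p (a, b) (merge J z w) x'' * phi x'')"
    unfolding opapp_def y0 ..
  also have "\<dots> = (\<Sum>x''\<in>(\<lambda>x. merge J x w) ` basis J p. Eop I p (a, b) (merge J z w) x'' * phi x'')"
    by (rule sum.mono_neutral_left[OF fb sub, symmetric]) (use zero in blast)
  also have "\<dots> = (\<Sum>x\<in>basis J p. Eop I p (a, b) (merge J z w) (merge J x w) * phi (merge J x w))"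
    using inj by (simp add: sum.reindex)
  also have "\<dots> = (\<Sum>x\<in>basis J p. Eop J p (proj J y0) z x * phi (merge J x w))"
    using E_merge[OF JI fI sp' z _ w] y0 by (intro sum.cong) auto
  finally show ?thesis by simp
qed

theorem proposition12:
  fixes p n :: nat and C :: "fv set" and J :: "nat set"
    and phi :: "st \<Rightarrow> complex" and lam lam' :: "op \<Rightarrow> complex"
  assumes "prime p"
    and "symp_self_orth {1..n} p C"
    and "J \<subset> {1..n}"
    and "is_character {1..n} p C lam"
    and "phi \<in> stab_code {1..n} p C lam"
    and "is_character J p (shorten J C) lam'"
    and "\<forall>y\<in>C. supp_in J y \<longrightarrow> lam' (Eop J p (proj J y)) = lam (Eop {1..n} p y)"
  shows "colspace J p (ptrace {1..n} p ({1..n} - J) (outer phi))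
           \<subseteq> stab_code J p (shorten J C) lam'"
proof
  define I where "I = {1..n}"
  define T where "T = I - J"
  have JI: "J \<subseteq> I" using assms(3) unfolding I_def by blast
  have fI: "finite I" unfolding I_def by simp
  have fJ: "finite J" using JI fI finite_subset by blast
  have fbJ: "finite (basis J p)" using fJ by (rule finite_basis)
  have ITJ: "I - T = J" using JI unfolding T_def by blast
  define sigma where "sigma = ptrace I p T (outer phi)"
  have sig: "sigma y x = (if y \<in> basis J p \<and> x \<in> basis J p
      then (\<Sum>w\<in>basis T p. phi (merge J y w) * cnj (phi (merge J x w))) else 0)" for y x
    unfolding sigma_def ptrace_def ITJ outer_def ..
  fix u assume "u \<in> colspace J p (ptrace {1..n} p ({1..n} - J) (outer phi))"
  then obtain v where u: "u = opapp J p sigma v"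
    unfolding colspace_def sigma_def I_def T_def by blast
  have uz: "u z = (\<Sum>x\<in>basis J p. (\<Sum>w\<in>basis T p. phi (merge J z w) * cnj (phi (merge J x w))) * v x)"
    if "z \<in> basis J p" for z
    unfolding u opapp_def sig using that by (intro sum.cong) auto
  have uvec: "is_vec J p u"
    unfolding is_vec_def u opapp_def sig by simp
  have eigphi: "opapp I p E phi = (\<lambda>x. lam E * phi x)" if "E \<in> stab_group I p C" for E
    using assms(5) that unfolding stab_code_def I_def by blast
  have "opapp J p E u = (\<lambda>x. lam' E * u x)" if "E \<in> stab_group J p (shorten J C)" for E
    using that
  proof (induction rule: stab_group.induct)
    case (scalar l)
    have "opapp J p (scal (xi p ^ l) (idop J p)) u y = xi p ^ l * u y" for y
    proof -
      have "opapp J p (scal (xi p ^ l) (idop J p)) u y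
         = (\<Sum>x\<in>basis J p. if x = y then (if y \<in> basis J p then xi p ^ l * u y else 0) else 0)"
        unfolding opapp_def scal_def idop_def by (intro sum.cong) auto
      also have "\<dots> = xi p ^ l * u y" using fbJ uvec unfolding is_vec_def by simp
      finally show ?thesis .
    qed
    then show ?case using char_scalar[OF assms(6) fbJ] by auto
  next
    case (gen y)
    then obtain y0 where y0: "y = proj J y0" "y0 \<in> C" "supp_in J y0"
      unfolding shorten_def by blast
    define L where "L = lam (Eop I p y0)"
    have lamL: "lam' (Eop J p y) = L" using assms(7) y0 unfolding L_def I_def by blast
    have eig: "opapp I p (Eop I p y0) phi = (\<lambda>x. L * phi x)"
      unfolding L_def by (rule eigphi) (rule stab_group.gen[OF y0(2)])
    have K: "(\<Sum>x\<in>basis J p. Eop J p y z x * phi (merge J x w)) = L * phi (merge J z w)"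
      if "z \<in> basis J p" "w \<in> basis T p" for z w
      using eig_merge[OF JI fI y0(3) eig that(1)] that(2) y0(1) unfolding T_def by simp
    have "opapp J p (Eop J p y) u z = L * u z" for z
    proof (cases "z \<in> basis J p")
      case False
      then have "Eop J p y z x = 0" for x by (cases y) simp
      then show ?thesis using False uvec unfolding is_vec_def opapp_def by simp
    next
      case True
      have "opapp J p (Eop J p y) u z
          = (\<Sum>x'\<in>basis J p. Eop J p y z x' * (\<Sum>x\<in>basis J p. (\<Sum>w\<in>basis T p. phi (merge J x' w) * cnj (phi (merge J x w))) * v x))"
        unfolding opapp_def using uz by (intro sum.cong) auto
      also have "\<dots> = (\<Sum>x'\<in>basis J p. \<Sum>x\<in>basis J p. \<Sum>w\<in>basis T p. (Eop J p y z x' * phi (merge J x' w)) * (cnj (phi (merge J x w)) * v x))"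
        by (simp add: sum_distrib_left sum_distrib_right mult_ac)
      also have "\<dots> = (\<Sum>x\<in>basis J p. \<Sum>x'\<in>basis J p. \<Sum>w\<in>basis T p. (Eop J p y z x' * phi (merge J x' w)) * (cnj (phi (merge J x w)) * v x))"
        by (rule sum.swap)
      also have "\<dots> = (\<Sum>x\<in>basis J p. \<Sum>w\<in>basis T p. \<Sum>x'\<in>basis J p. (Eop J p y z x' * phi (merge J x' w)) * (cnj (phi (merge J x w)) * v x))"
        by (intro sum.cong refl sum.swap)
      also have "\<dots> = (\<Sum>x\<in>basis J p. \<Sum>w\<in>basis T p. (\<Sum>x'\<in>basis J p. Eop J p y z x' * phi (merge J x' w)) * (cnj (phi (merge J x w)) * v x))"
        by (simp add: sum_distrib_right)
      also have "\<dots> = (\<Sum>x\<in>basis J p. \<Sum>w\<in>basis T p. (L * phi (merge J z w)) * (cnj (phi (merge J x w)) * v x))"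
        using K[OF True] by (intro sum.cong refl) simp
      also have "\<dots> = L * u z"
        unfolding uz[OF True] by (simp add: sum_distrib_left sum_distrib_right mult_ac)
      finally show ?thesis .
    qed
    then show ?case using lamL by auto
  next
    case (mult A B)
    have "opapp J p (opmul J p A B) u = opapp J p A (\<lambda>x. lam' B * u x)"
      using opapp_opmul mult.IH(2) by metis
    also have "\<dots> = (\<lambda>x. lam' B * opapp J p A u x)"
      unfolding opapp_def by (simp add: sum_distrib_left mult_ac)
    also have "\<dots> = (\<lambda>x. lam' (opmul J p A B) * u x)"
      using mult.IH(1) assms(6) mult.hyps unfolding is_character_def by (simp add: mult_ac)
    finally show ?case .
  qed
  then show "u \<in> stab_code J p (shorten J C) lam'"
    unfolding stab_code_def using uvec by blast
qed

end
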